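(* Let $P$ be a planar point set of $n$ points in general position and $k=|\mathrm{ch}(P)|$. For every quadrangle tree $\mathcal{Q}$ for $P$, \[ V_{\max}(P)\le|\mathrm{OD}(P,\mathcal{Q})|\cdot 3^n\cdot n^k. \]
   Context: General position: no duplicates, no three collinear. $\mathrm{CH}(P)$ is the convex hull, $\mathrm{ch}(P)$ the points of $P$ on its boundary. $\mathbb{I}_P$ is the set of arrays $I_P$ of length $n$ (indices $1,\dots,n$) storing the points of $P$. A witness list of $I_P$ is $W=(a_i,b_i,c_i)_{i=1}^n\in\mathbb{Z}^{n\times3}$ with $a_i=b_i=c_i=-1$ if $I_P[i]\in\mathrm{ch}(P)$ and otherwise $I_P[i]$ in the interior of triangle $(I_P[a_i],I_P[b_i],I_P[c_i])$. $V(P,W)=\{I_P\in\mathbb{I}_P: W\text{ is a witness list of }I_P\}$ and $V_{\max}(P)=\max_{W\in\mathbb{Z}^{n\times3}}|V(P,W)|$. A rooted convex polygon $(C,p,q)$ is a convex polygon with a chosen edge $pq$; for distinct vertices $r,s$ of $C$, $C^{rs}$ is the piece of $C$ cut by line $rs$ not containing $pq$. A quadrangle tree of $(C,p,q)$ is a binary tree whose nodes store quadrangles spanned by (up to) four vertices of $C$: the root stores $p,q,s,r$ where $rs$ is an edge of $C$ (allowing $p=r$ and/or $q=s$); if $p\ne r$ the root has a child whose subtree is a quadrangle tree of $(C^{pr},p,r)$; if $q\ne s$ the root has a child whose subtree is a quadrangle tree of $(C^{qs},q,s)$. Each node's rooted edge is the chosen edge of its rooted polygon. A quadrangle tree for $P$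 is a quadrangle tree of $(\mathrm{CH}(P),p,q)$ for an edge $pq$ of $\mathrm{CH}(P)$. The population of a node is the set of points of $P$ on or inside its quadrangle except those on the line of its rooted edge; $r(x)$ denotes the node whose population contains $x$. Partial order: $x\prec_{\mathcal{Q}}y$ if $r(x)$ is a strict ancestor of $r(y)$, or $r(x)=r(y)$ and $y$ lies deeper than $x$ inside the halfplane bounded by the rooted-edge line of $r(x)$ containing its quadrangle. A downdraft is a map $\varphi:P-\mathrm{ch}(P)\to P$ with $x\prec_{\mathcal{Q}}\varphi(x)$ for all $x$; an ordered downdraft is a downdraft plus a total order on each fiber $\varphi^{-1}(\{y\})$; $\mathrm{OD}(P,\mathcal{Q})$ is the set of ordered downdrafts. *)

theory Defs
  imports "HOL-Analysis.Analysis" "HOL-Library.Tree"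
begin

type_synonym pt = "real ^ 2"

definition general_position :: "pt set \<Rightarrow> bool" where
  "general_position P \<longleftrightarrow>
     (\<forall>a\<in>P. \<forall>b\<in>P. \<forall>c\<in>P. distinct [a, b, c] \<longrightarrow> \<not> collinear {a, b, c})"

definition ch :: "pt set \<Rightarrow> pt set" where
  "ch P = P \<inter> frontier (convex hull P)"

definition arrays :: "pt set \<Rightarrow> (nat \<Rightarrow> pt) set" where
  "arrays P = {I \<in> {1..card P} \<rightarrow>\<^sub>E P. bij_betw I {1..card P} P}"

definition witness_lists :: "nat \<Rightarrow> (nat \<Rightarrow> int \<times> int \<times> int) set" where
  "witness_lists n = {1..n} \<rightarrow>\<^sub>E UNIV"

definition is_witness_list :: "pt set \<Rightarrow> (nat \<Rightarrow> int \<times> int \<times> int) \<Rightarrow> (nat \<Rightarrow> pt) \<Rightarrow> bool" where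
  "is_witness_list P W I \<longleftrightarrow>
     (\<forall>i\<in>{1..card P}.
        (case W i of (a, b, c) \<Rightarrow>
           (if I i \<in> ch P then a = -1 \<and> b = -1 \<and> c = -1
            else a \<in> {1..int (card P)} \<and> b \<in> {1..int (card P)} \<and> c \<in> {1..int (card P)} \<and>
                 I i \<in> interior (convex hull {I (nat a), I (nat b), I (nat c)}))))"

definition V :: "pt set \<Rightarrow> (nat \<Rightarrow> int \<times> int \<times> int) \<Rightarrow> (nat \<Rightarrow> pt) set" where
  "V P W = {I \<in> arrays P. is_witness_list P W I}"

definition Vmax :: "pt set \<Rightarrow> nat" where
  "Vmax P = Max ((\<lambda>W. card (V P W)) ` witness_lists (card P))"

definition hull_edge :: "pt set \<Rightarrow> pt \<Rightarrow> pt \<Rightarrow> bool" where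
  "hull_edge P a b \<longleftrightarrow> a \<noteq> b \<and> closed_segment a b face_of convex hull P"

text \<open>A list c = [c_0,...,c_m] enumerating ch(P) in boundary order of CH(P):
  all cyclically consecutive pairs are edges of CH(P). The closing edge c_m c_0
  is the root edge pq of the quadrangle tree.\<close>
definition hull_order :: "pt set \<Rightarrow> pt list \<Rightarrow> bool" where
  "hull_order P c \<longleftrightarrow> distinct c \<and> set c = ch P \<and> length c \<ge> 2 \<and>
     (\<forall>i<length c. hull_edge P (c ! i) (c ! ((i + 1) mod length c)))"

text \<open>Quadrangle trees of the rooted convex polygon spanned by the chain
  c_i, c_(i+1), ..., c_j with rooted edge c_i c_j. A node labelled (i,t,j) stores
  the quadrangle c_i, c_j, c_(t+1), c_t, where c_t c_(t+1) is an edge of the polygon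
  (c_t = c_i and/or c_(t+1) = c_j allowed).\<close>
inductive qtree_on :: "nat \<Rightarrow> nat \<Rightarrow> (nat \<times> nat \<times> nat) tree \<Rightarrow> bool" where
  "\<lbrakk> i \<le> t; t < j;
     (t = i \<and> l = Leaf) \<or> (t \<noteq> i \<and> qtree_on i t l);
     (t + 1 = j \<and> r = Leaf) \<or> (t + 1 \<noteq> j \<and> qtree_on (t + 1) j r) \<rbrakk>
   \<Longrightarrow> qtree_on i j (Node l (i, t, j) r)"

definition quadrangle_tree_for :: "pt set \<Rightarrow> pt list \<Rightarrow> (nat \<times> nat \<times> nat) tree \<Rightarrow> bool" where
  "quadrangle_tree_for P c T \<longleftrightarrow> hull_order P c \<and> qtree_on 0 (length c - 1) T"

definition quad :: "pt list \<Rightarrow> nat \<times> nat \<times> nat \<Rightarrow> pt set" where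
  "quad c N = (case N of (i, t, j) \<Rightarrow> convex hull {c ! i, c ! t, c ! (t + 1), c ! j})"

definition rline :: "pt list \<Rightarrow> nat \<times> nat \<times> nat \<Rightarrow> pt set" where
  "rline c N = (case N of (i, t, j) \<Rightarrow> affine hull {c ! i, c ! j})"

definition population :: "pt set \<Rightarrow> pt list \<Rightarrow> nat \<times> nat \<times> nat \<Rightarrow> pt set" where
  "population P c N = {x \<in> P. x \<in> quad c N \<and> x \<notin> rline c N}"

fun anc_pairs :: "'a tree \<Rightarrow> ('a \<times> 'a) set" where
  "anc_pairs Leaf = {}"
| "anc_pairs (Node l a r) = {a} \<times> (set_tree l \<union> set_tree r) \<union> anc_pairs l \<union> anc_pairs r"

definition qprec :: "pt set \<Rightarrow> pt list \<Rightarrow> (nat \<times> nat \<times> nat) tree \<Rightarrow> pt \<Rightarrow> pt \<Rightarrow> bool" where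
  "qprec P c T x y \<longleftrightarrow>
     (\<exists>Nx\<in>set_tree T. \<exists>Ny\<in>set_tree T.
        x \<in> population P c Nx \<and> y \<in> population P c Ny \<and>
        ((Nx, Ny) \<in> anc_pairs T \<or>
         (Nx = Ny \<and> infdist x (rline c Nx) < infdist y (rline c Nx))))"

definition downdrafts :: "pt set \<Rightarrow> pt list \<Rightarrow> (nat \<times> nat \<times> nat) tree \<Rightarrow> (pt \<Rightarrow> pt) set" where
  "downdrafts P c T =
     {\<phi> \<in> (P - ch P) \<rightarrow>\<^sub>E P. \<forall>x\<in>P - ch P. qprec P c T x (\<phi> x)}"

definition fiber :: "pt set \<Rightarrow> (pt \<Rightarrow> pt) \<Rightarrow> pt \<Rightarrow> pt set" where
  "fiber P \<phi> y = {x \<in> P - ch P. \<phi> x = y}"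

definition OD :: "pt set \<Rightarrow> pt list \<Rightarrow> (nat \<times> nat \<times> nat) tree \<Rightarrow> ((pt \<Rightarrow> pt) \<times> (pt \<Rightarrow> pt rel)) set" where
  "OD P c T =
     {(\<phi>, \<omega>). \<phi> \<in> downdrafts P c T \<and>
        \<omega> \<in> (\<Pi>\<^sub>E y\<in>P. {r. r \<subseteq> fiber P \<phi> y \<times> fiber P \<phi> y \<and> linear_order_on (fiber P \<phi> y) r})}"

end

theory Submission
  imports Defs
begin


definition orient :: "pt \<Rightarrow> pt \<Rightarrow> pt \<Rightarrow> real" where
  "orient a b y = (b$1 - a$1) * (y$2 - a$2) - (b$2 - a$2) * (y$1 - a$1)"

lemma vec2_eq: "(x::pt) = y \<longleftrightarrow> x$1 = y$1 \<and> x$2 = y$2"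
  by (metis exhaust_2 vec_eq_iff)

lemma orient_swap: "orient b a y = - orient a b y"
  unfolding orient_def by (simp add: algebra_simps)

lemma orient_cyc: "orient b c a = orient a b c"
  unfolding orient_def by (simp add: algebra_simps)

lemma orient_sum: "orient a b y + orient b c y + orient c a y = orient a b c"
  unfolding orient_def by (simp add: algebra_simps)

lemma orient_same[simp]: "orient a a y = 0"
  unfolding orient_def by simp

lemma tri_in_hull:
  fixes s :: real and a b c y :: pt
  assumes "0 \<le> s * orient a b y" "0 \<le> s * orient b c y" "0 \<le> s * orient c a y"
    "0 < s * orient a b y + s * orient b c y + s * orient c a y"
  shows "y \<in> convex hull {a,b,c}"
proof -
  define Dl where "Dl = s * orient a b y + s * orient b c y + s * orient c a y"
  have "Dl = s * (orient a b y + orient b c y + orient c a y)" unfolding Dl_def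
    by (simp add: algebra_simps)
  then have Dl: "Dl = s * orient a b c" using orient_sum[of a b y c] by simp
  have Dp: "Dl > 0" using assms(4) Dl_def by simp
  have nz: "s \<noteq> 0" "orient a b c \<noteq> 0" using Dp Dl by auto
  define u where "u = s * orient b c y / Dl"
  define v where "v = s * orient c a y / Dl"
  define w where "w = s * orient a b y / Dl"
  have e1: "orient b c y * a$1 + orient c a y * b$1 + orient a b y * c$1 = orient a b c * y$1"
    unfolding orient_def by (simp add: algebra_simps)
  have e2: "orient b c y * a$2 + orient c a y * b$2 + orient a b y * c$2 = orient a b c * y$2"
    unfolding orient_def by (simp add: algebra_simps)
  have "u * a$1 + v * b$1 + w * c$1 = y$1"
  proof -
    have "u * a$1 + v * b$1 + w * c$1 = s * (orient b c y * a$1 + orient c a y * b$1 + orient a b y * c$1) / Dl"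
      unfolding u_def v_def w_def by (simp add: add_divide_distrib algebra_simps)
    also have "... = y$1" using e1 Dl nz by simp
    finally show ?thesis .
  qed
  moreover have "u * a$2 + v * b$2 + w * c$2 = y$2"
  proof -
    have "u * a$2 + v * b$2 + w * c$2 = s * (orient b c y * a$2 + orient c a y * b$2 + orient a b y * c$2) / Dl"
      unfolding u_def v_def w_def by (simp add: add_divide_distrib algebra_simps)
    also have "... = y$2" using e2 Dl nz by simp
    finally show ?thesis .
  qed
  ultimately have "y = u *\<^sub>R a + v *\<^sub>R b + w *\<^sub>R c"
    unfolding vec2_eq by simp
  moreover have "0 \<le> u" "0 \<le> v" "0 \<le> w"
    unfolding u_def v_def w_def using assms Dp by auto
  moreover have "u + v + w = 1"
  proof -
    have "u + v + w = (s * orient b c y + s * orient c a y + s * orient a b y) / Dl"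
      unfolding u_def v_def w_def by (simp add: add_divide_distrib)
    also have "... = Dl / Dl" by (simp add: Dl_def algebra_simps)
    finally show ?thesis using Dp by simp
  qed
  ultimately show ?thesis unfolding convex_hull_3 by blast
qed

lemma quad_in_hull:
  fixes s :: real and a b c d y :: pt
  assumes "0 \<le> s * orient a b y" "0 \<le> s * orient b c y" "0 \<le> s * orient c d y" "0 < s * orient d a y"
  shows "y \<in> convex hull {a,b,c,d}"
proof (cases "0 \<le> s * orient a c y")
  case True
  have "y \<in> convex hull {a,c,d}"
    by (rule tri_in_hull[of s]) (use True assms in linarith)+
  moreover have "convex hull {a,c,d} \<subseteq> convex hull {a,b,c,d}" by (rule hull_mono) auto
  ultimately show ?thesis by blast
next
  case False
  have sw: "s * orient c a y = - (s * orient a c y)" using orient_swap[of c a y] by simp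
  have "y \<in> convex hull {a,b,c}"
    by (rule tri_in_hull[of s]) (use False assms sw in linarith)+
  moreover have "convex hull {a,b,c} \<subseteq> convex hull {a,b,c,d}" by (rule hull_mono) auto
  ultimately show ?thesis by blast
qed

lemma affine_orient:
  assumes "y \<in> affine hull {a,b}" shows "orient a b y = 0"
proof -
  obtain u v where uv: "y = u *\<^sub>R a + v *\<^sub>R b" "u + v = 1"
    using assms unfolding affine_hull_2 by blast
  have u: "u = 1 - v" using uv(2) by simp
  have "y$1 = u * a$1 + v * b$1" "y$2 = u * a$2 + v * b$2" using uv(1) by simp_all
  then have h1: "y$1 - a$1 = v * (b$1 - a$1)" "y$2 - a$2 = v * (b$2 - a$2)"
    unfolding u by (auto simp: algebra_simps)
  show ?thesis unfolding orient_def h1 by (simp add: algebra_simps)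
qed

lemma orient0_line:
  assumes "a \<noteq> b" "orient a b y = 0"
  shows "\<exists>t. y = a + t *\<^sub>R (b - a)"
proof -
  define w1 where "w1 = b$1 - a$1"
  define w2 where "w2 = b$2 - a$2"
  define z1 where "z1 = y$1 - a$1"
  define z2 where "z2 = y$2 - a$2"
  have nz: "w1 * w1 + w2 * w2 \<noteq> 0"
    using assms(1) unfolding w1_def w2_def by (auto simp: vec2_eq add_nonneg_eq_0_iff)
  have o: "w1 * z2 = w2 * z1" using assms(2) unfolding orient_def w1_def w2_def z1_def z2_def by simp
  define t where "t = (z1 * w1 + z2 * w2) / (w1 * w1 + w2 * w2)"
  have "t * w1 = z1"
  proof -
    have "(z1 * w1 + z2 * w2) * w1 = z1 * (w1 * w1 + w2 * w2)" using o by algebra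
    then show ?thesis unfolding t_def using nz by (simp add: field_simps)
  qed
  moreover have "t * w2 = z2"
  proof -
    have "(z1 * w1 + z2 * w2) * w2 = z2 * (w1 * w1 + w2 * w2)" using o by algebra
    then show ?thesis unfolding t_def using nz by (simp add: field_simps)
  qed
  ultimately have "y = a + t *\<^sub>R (b - a)"
    unfolding vec2_eq w1_def w2_def z1_def z2_def by simp
  then show ?thesis by blast
qed


lemma norm2: "norm (x::pt) = sqrt ((x$1)^2 + (x$2)^2)"
  unfolding norm_vec_def L2_set_def by (simp add: sum_2)

lemma inner2: "inner (x::pt) y = x$1 * y$1 + x$2 * y$2"
  by (simp add: inner_vec_def sum_2)

lemma orient0_collinear:
  assumes "a \<noteq> b" "orient a b y = 0" shows "collinear {a,b,y}"
proof -
  obtain t where t: "y = a + t *\<^sub>R (b - a)" using orient0_line[OF assms] by blast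
  have "y = (1 - t) *\<^sub>R a + (1 - (1 - t)) *\<^sub>R b" unfolding t by (simp add: algebra_simps)
  then have "collinear {a,y,b}" unfolding collinear_3_expand by blast
  then show ?thesis by (simp add: insert_commute)
qed

lemma orient0_affine:
  assumes "a \<noteq> b" "orient a b y = 0" shows "y \<in> affine hull {a,b}"
proof -
  obtain t where t: "y = a + t *\<^sub>R (b - a)" using orient0_line[OF assms] by blast
  have "y = (1 - t) *\<^sub>R a + t *\<^sub>R b" unfolding t by (simp add: algebra_simps)
  then show ?thesis unfolding affine_hull_2 by force
qed

lemma infdist_line:
  assumes "a \<noteq> b"
  shows "infdist y (affine hull {a,b}) = \<bar>orient a b y\<bar> / sqrt ((b$1 - a$1)^2 + (b$2 - a$2)^2)"
proof -
  define w1 where "w1 = b$1 - a$1"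
  define w2 where "w2 = b$2 - a$2"
  define W where "W = sqrt (w1^2 + w2^2)"
  have wpos: "w1^2 + w2^2 > 0"
    using assms unfolding w1_def w2_def by (auto simp: vec2_eq add_nonneg_eq_0_iff intro: add_pos_nonneg add_nonneg_pos)
  then have Wpos: "W > 0" unfolding W_def by simp
  have ne: "affine hull {a,b} \<noteq> {}" using hull_inc[of a "{a,b}" affine] by auto
  have lower: "\<bar>orient a b y\<bar> / W \<le> dist y z" if z: "z \<in> affine hull {a,b}" for z
  proof -
    have oz: "orient a b z = 0" using affine_orient[OF z] .
    define d1 where "d1 = y$1 - z$1"
    define d2 where "d2 = y$2 - z$2"
    have o: "orient a b y = w1 * d2 - w2 * d1"
      using oz unfolding orient_def w1_def w2_def d1_def d2_def by (simp add: algebra_simps)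
    have dz: "dist y z = sqrt (d1^2 + d2^2)" unfolding dist_norm norm2 d1_def d2_def by simp
    have "(w1 * d2 - w2 * d1)^2 \<le> (w1^2 + w2^2) * (d1^2 + d2^2)"
    proof -
      have "(w1^2 + w2^2) * (d1^2 + d2^2) - (w1 * d2 - w2 * d1)^2 = (w1 * d1 + w2 * d2)^2"
        by (simp add: power2_eq_square algebra_simps)
      then show ?thesis by (smt (verit) zero_le_power2)
    qed
    then have "sqrt ((w1 * d2 - w2 * d1)^2) \<le> W * sqrt (d1^2 + d2^2)"
      unfolding W_def by (metis real_sqrt_le_mono real_sqrt_mult)
    then have "\<bar>orient a b y\<bar> \<le> W * dist y z" using o dz by simp
    then show ?thesis using Wpos by (simp add: field_simps)
  qed
  have ge: "\<bar>orient a b y\<bar> / W \<le> infdist y (affine hull {a,b})"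
    unfolding infdist_notempty[OF ne] by (rule cINF_greatest[OF ne]) (use lower in auto)
  define k where "k = orient a b y / (w1^2 + w2^2)"
  define z where "z = y - k *\<^sub>R (vector [- w2, w1] :: pt)"
  have "orient a b z = orient a b y - k * (w1^2 + w2^2)"
    unfolding z_def orient_def w1_def w2_def by (simp add: algebra_simps power2_eq_square)
  moreover have "k * (w1^2 + w2^2) = orient a b y"
  proof -
    have Qnz: "w1^2 + w2^2 \<noteq> 0" using wpos by linarith
    show ?thesis unfolding k_def using Qnz by (simp del: sum_power2_eq_zero_iff)
  qed
  ultimately have "orient a b z = 0" by simp
  then have zin: "z \<in> affine hull {a,b}" using orient0_affine[OF assms] by blast
  have "dist y z = \<bar>k\<bar> * W" unfolding z_def dist_norm norm2 W_def
    by (simp add: power_mult_distrib real_sqrt_mult add.commute)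
       (metis distrib_left real_sqrt_abs real_sqrt_mult)
  also have "... = \<bar>orient a b y\<bar> / W"
  proof -
    have Q: "w1^2 + w2^2 = W * W" unfolding W_def using wpos by simp
    have "\<bar>k\<bar> = \<bar>orient a b y\<bar> / (W * W)" unfolding k_def Q by (simp add: abs_divide)
    then show ?thesis using Wpos by simp
  qed
  finally have le: "infdist y (affine hull {a,b}) \<le> \<bar>orient a b y\<bar> / W"
    using infdist_le[OF zin, of y] by simp
  show ?thesis using ge le unfolding W_def w1_def w2_def by simp
qed

lemma lin_interior:
  fixes S :: "pt set" and nv :: pt
  assumes "finite S" "x \<in> interior (convex hull S)" "nv \<noteq> 0"
  shows "\<exists>s\<in>S. inner nv s > inner nv x"
proof -
  obtain e where e: "e > 0" "ball x e \<subseteq> convex hull S" using assms(2) mem_interior by blast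
  define z where "z = x + (e / (2 * norm nv)) *\<^sub>R nv"
  have "dist x z = e / 2" unfolding z_def dist_norm using assms(3) e(1) by simp
  then have "z \<in> convex hull S" using e by auto
  have "inner nv z = inner nv x + (e / (2 * norm nv)) * (norm nv)^2"
    unfolding z_def by (simp add: inner_add_right power2_norm_eq_inner)
  also have "... = inner nv x + e * norm nv / 2" using assms(3) by (simp add: power2_eq_square)
  finally have zgt: "inner nv z > inner nv x" using e(1) assms(3) by simp
  have Sne: "S \<noteq> {}" using assms(2) interior_subset by fastforce
  define M where "M = Max (inner nv ` S)"
  have "convex hull S \<subseteq> {u. inner nv u \<le> M}"
    by (rule hull_minimal) (auto simp: M_def assms(1) convex_halfspace_le)
  then have "inner nv z \<le> M" using \<open>z \<in> convex hull S\<close> by blast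
  moreover have "M \<in> inner nv ` S" unfolding M_def using Sne assms(1) by simp
  moreover obtain s where "s \<in> S" "M = inner nv s" using calculation(2) by blast
  ultimately have "inner nv s > inner nv x" using zgt by linarith
  then show ?thesis using \<open>s \<in> S\<close> by blast
qed

lemma lin_interior_orient:
  fixes S :: "pt set"
  assumes "finite S" "x \<in> interior (convex hull S)" "p \<noteq> q" "\<sigma> \<noteq> 0"
  shows "\<exists>s\<in>S. \<sigma> * orient p q s > \<sigma> * orient p q x"
proof -
  define nv where "nv = \<sigma> *\<^sub>R (vector [- (q$2 - p$2), q$1 - p$1] :: pt)"
  have "nv \<noteq> 0" using assms(3,4) unfolding nv_def by (auto simp: vec2_eq)
  have o: "\<sigma> * orient p q y = inner nv y - inner nv p" for y
    unfolding nv_def orient_def inner2 by (simp add: algebra_simps)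
  obtain s where "s \<in> S" "inner nv s > inner nv x" using lin_interior[OF assms(1,2) \<open>nv \<noteq> 0\<close>] by blast
  then show ?thesis using o by force
qed

lemma edge_side:
  assumes fin: "finite P" and gp: "general_position P" and ab: "a \<in> P" "b \<in> P" "a \<noteq> b"
    and face: "closed_segment a b face_of convex hull P"
    and x: "x \<in> P" "x \<noteq> a" "x \<noteq> b"
  shows "\<exists>\<sigma>::real. (\<sigma> = 1 \<or> \<sigma> = -1) \<and> (\<forall>y\<in>P. 0 \<le> \<sigma> * orient a b y \<and> (y \<noteq> a \<and> y \<noteq> b \<longrightarrow> 0 < \<sigma> * orient a b y))"
proof -
  have "closed_segment a b exposed_face_of convex hull P"
    using exposed_face_of_polyhedron[OF polyhedron_convex_hull[OF fin]] face by simp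
  then obtain nv \<beta> where nb: "convex hull P \<subseteq> {u. inner nv u \<le> \<beta>}"
      "closed_segment a b = convex hull P \<inter> {u. inner nv u = \<beta>}"
    unfolding exposed_face_of_def by blast
  have na: "inner nv a = \<beta>" "inner nv b = \<beta>" using nb(2) ends_in_segment[of a b] by blast+
  have strict: "inner nv y < \<beta>" if y: "y \<in> P" "y \<noteq> a" "y \<noteq> b" for y
  proof -
    have "y \<notin> closed_segment a b"
    proof
      assume "y \<in> closed_segment a b"
      then have "{a,b,y} \<subseteq> closed_segment a b" using ends_in_segment by auto
      then have "collinear {a,b,y}"
        by (rule collinear_subset[OF collinear_closed_segment[of a b]])
      then show False using gp y ab unfolding general_position_def by auto
    qed
    moreover have "inner nv y \<le> \<beta>" using nb(1) hull_inc[OF y(1)] by blast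
    ultimately show ?thesis using nb(2) hull_inc[OF y(1), of convex] by force
  qed
  define w1 where "w1 = b$1 - a$1"
  define w2 where "w2 = b$2 - a$2"
  define e where "e = nv$2 * w1 - nv$1 * w2"
  have wpos: "w1 * w1 + w2 * w2 > 0"
    using ab(3) unfolding w1_def w2_def sum_squares_gt_zero_iff by (auto simp: vec2_eq)
  have perp: "nv$1 * w1 + nv$2 * w2 = 0" using na unfolding inner2 w1_def w2_def by (simp add: algebra_simps)
  have ident: "e * orient a b y = (w1 * w1 + w2 * w2) * (inner nv y - \<beta>)" for y
  proof -
    have "inner nv y - \<beta> = nv$1 * (y$1 - a$1) + nv$2 * (y$2 - a$2)"
      using na(1) unfolding inner2 by (simp add: algebra_simps)
    moreover have "e * orient a b y = (w1 * w1 + w2 * w2) * (nv$1 * (y$1 - a$1) + nv$2 * (y$2 - a$2))"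
      unfolding e_def orient_def w1_def[symmetric] w2_def[symmetric] using perp by algebra
    ultimately show ?thesis by simp
  qed
  have neg: "e * orient a b y \<le> 0" if "y \<in> P" for y
    using ident[of y] nb(1) hull_inc[OF that] wpos by (auto simp: mult_le_0_iff)
  have sneg: "e * orient a b y < 0" if "y \<in> P" "y \<noteq> a" "y \<noteq> b" for y
    using ident[of y] strict[OF that] wpos by (auto simp: mult_less_0_iff)
  have "e \<noteq> 0" using sneg[OF x] by auto
  define \<sigma> where "\<sigma> = (if e > 0 then -1 else (1::real))"
  have "\<forall>y\<in>P. 0 \<le> \<sigma> * orient a b y \<and> (y \<noteq> a \<and> y \<noteq> b \<longrightarrow> 0 < \<sigma> * orient a b y)"
  proof (intro ballI conjI impI)
    fix y assume "y \<in> P"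
    show "0 \<le> \<sigma> * orient a b y" using neg[OF \<open>y \<in> P\<close>] \<open>e \<noteq> 0\<close> unfolding \<sigma>_def
      by (auto simp: mult_le_0_iff)
    assume "y \<noteq> a \<and> y \<noteq> b"
    then show "0 < \<sigma> * orient a b y" using sneg[OF \<open>y \<in> P\<close>] \<open>e \<noteq> 0\<close> unfolding \<sigma>_def
      by (auto simp: mult_less_0_iff)
  qed
  then show ?thesis unfolding \<sigma>_def by (intro exI[of _ "if e > 0 then -1 else (1::real)"]) auto
qed



lemma qtree_range:
  "qtree_on i j S \<Longrightarrow> (a,b,d) \<in> set_tree S \<Longrightarrow> i \<le> a \<and> a \<le> b \<and> b < d \<and> d \<le> j"
proof (induction arbitrary: a b d rule: qtree_on.induct)
  case (1 i t j l r)
  then show ?case by (auto; fastforce)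
qed

lemma qtree_sub:
  "qtree_on i j S \<Longrightarrow> Node l (a,b,d) r \<in> subtrees S \<Longrightarrow> qtree_on a d (Node l (a,b,d) r)"
proof (induction arbitrary: a b d l r rule: qtree_on.induct)
  case (1 i t j l r)
  then show ?case using qtree_on.intros[of i t j l r] by auto
qed

lemma subtrees_trans: "S \<in> subtrees T \<Longrightarrow> U \<in> subtrees S \<Longrightarrow> U \<in> subtrees T"
  by (induction T) auto

lemma subtrees_set: "S \<in> subtrees T \<Longrightarrow> set_tree S \<subseteq> set_tree T"
  by (induction T) auto

lemma subtrees_anc: "S \<in> subtrees T \<Longrightarrow> anc_pairs S \<subseteq> anc_pairs T"
  by (induction T) auto

definition fN :: "pt list \<Rightarrow> real \<Rightarrow> nat \<times> nat \<times> nat \<Rightarrow> pt \<Rightarrow> real" where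
  "fN c \<sigma> N y = (case N of (i,t,j) \<Rightarrow> \<sigma> * orient (c!j) (c!i) y)"

lemma cov:
  assumes "qtree_on i j S"
    and G: "\<And>t y. t + 1 \<le> j \<Longrightarrow> y \<in> P \<Longrightarrow> 0 \<le> \<sigma> * orient (c!t) (c!(t+1)) y"
    and "y \<in> P" "0 < \<sigma> * orient (c!j) (c!i) y"
  shows "\<exists>l N r. Node l N r \<in> subtrees S \<and> y \<in> population P c N \<and> 0 < fN c \<sigma> N y"
  using assms
proof (induction arbitrary: y rule: qtree_on.induct)
  case (1 i t j l r)
  show ?case
  proof (cases "t \<noteq> i \<and> 0 < \<sigma> * orient (c!t) (c!i) y")
    case True
    then have "qtree_on i t l \<and> (\<forall>y. (\<forall>t' y'. t' + 1 \<le> t \<longrightarrow> y' \<in> P \<longrightarrow> 0 \<le> \<sigma> * orient (c!t') (c!(t'+1)) y') \<longrightarrow> y \<in> P \<longrightarrow> 0 < \<sigma> * orient (c!t) (c!i) y \<longrightarrow> (\<exists>l' N r'. Node l' N r' \<in> subtrees l \<and> y \<in> population P c N \<and> 0 < fN c \<sigma> N y))"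
      using "1.IH"(1) by blast
    moreover have "\<forall>t' y'. t' + 1 \<le> t \<longrightarrow> y' \<in> P \<longrightarrow> 0 \<le> \<sigma> * orient (c!t') (c!(t'+1)) y'"
      using "1.prems"(1) "1.hyps"(2) by simp
    ultimately obtain l' N r' where "Node l' N r' \<in> subtrees l" "y \<in> population P c N" "0 < fN c \<sigma> N y"
      using True "1.prems"(2) by blast
    moreover have "Node l' N r' \<in> subtrees (Node l (i,t,j) r)" using calculation(1) by simp
    ultimately show ?thesis by blast
  next
    case F1: False
    show ?thesis
    proof (cases "t + 1 \<noteq> j \<and> 0 < \<sigma> * orient (c!j) (c!(t+1)) y")
      case True
      then have "qtree_on (t+1) j r \<and> (\<forall>y. (\<forall>t' y'. t' + 1 \<le> j \<longrightarrow> y' \<in> P \<longrightarrow> 0 \<le> \<sigma> * orient (c!t') (c!(t'+1)) y') \<longrightarrow> y \<in> P \<longrightarrow> 0 < \<sigma> * orient (c!j) (c!(t+1)) y \<longrightarrow> (\<exists>l' N r'. Node l' N r' \<in> subtrees r \<and> y \<in> population P c N \<and> 0 < fN c \<sigma> N y))"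
        using "1.IH"(2) by blast
      moreover have "\<forall>t' y'. t' + 1 \<le> j \<longrightarrow> y' \<in> P \<longrightarrow> 0 \<le> \<sigma> * orient (c!t') (c!(t'+1)) y'"
        using "1.prems"(1) by simp
      ultimately obtain l' N r' where "Node l' N r' \<in> subtrees r" "y \<in> population P c N" "0 < fN c \<sigma> N y"
        using True "1.prems"(2) by blast
      moreover have "Node l' N r' \<in> subtrees (Node l (i,t,j) r)" using calculation(1) by simp
      ultimately show ?thesis by blast
    next
      case F2: False
      have q1: "0 \<le> \<sigma> * orient (c!i) (c!t) y"
        using F1 orient_swap[of "c!t" "c!i" y] by (cases "t = i") auto
      have q2: "0 \<le> \<sigma> * orient (c!t) (c!(t+1)) y"
        using "1.prems"(1,2) "1.hyps"(2) by simp
      have q3: "0 \<le> \<sigma> * orient (c!(t+1)) (c!j) y"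
        using F2 orient_swap[of "c!j" "c!(t+1)" y] by (cases "t + 1 = j") auto
      have inq: "y \<in> quad c (i,t,j)"
        unfolding quad_def using quad_in_hull[OF q1 q2 q3 "1.prems"(3)] by simp
      have nl: "y \<notin> rline c (i,t,j)"
      proof
        assume "y \<in> rline c (i,t,j)"
        then have "orient (c!i) (c!j) y = 0" unfolding rline_def using affine_orient by simp
        then show False using "1.prems"(3) orient_swap[of "c!j" "c!i" y] by simp
      qed
      have "y \<in> population P c (i,t,j)" unfolding population_def using inq nl "1.prems"(2) by simp
      moreover have "0 < fN c \<sigma> (i,t,j) y" unfolding fN_def using "1.prems"(3) by simp
      ultimately show ?thesis by force
    qed
  qed
qed



lemma hull_setup:
  assumes fin: "finite P" and gp: "general_position P" and ho: "hull_order P c"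
    and x0: "x0 \<in> P" "x0 \<notin> ch P"
  shows "\<exists>\<sigma>::real. (\<sigma> = 1 \<or> \<sigma> = -1) \<and>
    (\<forall>t y. t + 1 < length c \<longrightarrow> y \<in> P \<longrightarrow> 0 \<le> \<sigma> * orient (c!t) (c!(t+1)) y) \<and>
    (\<forall>y\<in>P - ch P. 0 < \<sigma> * orient (c!(length c - 1)) (c!0) y)"
proof -
  define L where "L = length c"
  have dist: "distinct c" and setc: "set c = ch P" and L2: "L \<ge> 2"
    and edges: "\<And>i. i < L \<Longrightarrow> hull_edge P (c!i) (c!((i+1) mod L))"
    using ho unfolding hull_order_def L_def by auto
  have chP: "ch P \<subseteq> P" unfolding ch_def by auto
  have cP: "c!i \<in> P" if "i < L" for i using that setc chP L_def nth_mem by blast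
  have cx: "c!i \<noteq> x0" if "i < L" for i using that setc x0(2) L_def nth_mem by blast
  have "\<forall>i. \<exists>\<sigma>::real. i < L \<longrightarrow> (\<sigma> = 1 \<or> \<sigma> = -1) \<and> (\<forall>y\<in>P. 0 \<le> \<sigma> * orient (c!i) (c!((i+1) mod L)) y \<and>
      (y \<noteq> c!i \<and> y \<noteq> c!((i+1) mod L) \<longrightarrow> 0 < \<sigma> * orient (c!i) (c!((i+1) mod L)) y))"
  proof
    fix i
    show "\<exists>\<sigma>::real. i < L \<longrightarrow> (\<sigma> = 1 \<or> \<sigma> = -1) \<and> (\<forall>y\<in>P. 0 \<le> \<sigma> * orient (c!i) (c!((i+1) mod L)) y \<and>
      (y \<noteq> c!i \<and> y \<noteq> c!((i+1) mod L) \<longrightarrow> 0 < \<sigma> * orient (c!i) (c!((i+1) mod L)) y))"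
    proof (cases "i < L")
      case True
      have h: "hull_edge P (c!i) (c!((i+1) mod L))" using edges[OF True] .
      have m: "(i+1) mod L < L" using L2 by simp
      show ?thesis
        using edge_side[OF fin gp cP[OF True] cP[OF m] _ _ x0(1) cx[OF True, symmetric] cx[OF m, symmetric]] h
        unfolding hull_edge_def by blast
    qed simp
  qed
  then obtain sg where sg: "\<And>i. i < L \<Longrightarrow> (sg i = 1 \<or> sg i = -1) \<and> (\<forall>y\<in>P. 0 \<le> sg i * orient (c!i) (c!((i+1) mod L)) y \<and>
      (y \<noteq> c!i \<and> y \<noteq> c!((i+1) mod L) \<longrightarrow> 0 < sg i * orient (c!i) (c!((i+1) mod L)) y))"
    by metis
  have L3: "L \<ge> 3"
  proof (rule ccontr)
    assume "\<not> L \<ge> 3"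
    then have L2': "L = 2" using L2 by simp
    then obtain a0 a1 where c2: "c = [a0, a1]" unfolding L_def
      by (metis One_nat_def Suc_1 length_0_conv length_Suc_conv)
    define g where "g y = sg 0 * orient a0 a1 y" for y
    have sg0: "sg 0 = 1 \<or> sg 0 = -1" using sg[of 0] L2 by simp
    have gx0: "g x0 > 0" using sg[of 0] L2' x0 cx[of 0] cx[of 1] c2 unfolding g_def by auto
    have Pne: "P \<noteq> {}" using x0 by auto
    define M where "M = Max (g ` P)"
    have "M \<in> g ` P" unfolding M_def using fin Pne by simp
    then obtain ym where ym: "ym \<in> P" "g ym = M" by auto
    have Mge: "g y \<le> M" if "y \<in> P" for y unfolding M_def using fin that by simp
    have a01: "a0 \<noteq> a1" using dist c2 by simp
    have "ym \<notin> interior (convex hull P)"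
    proof
      assume "ym \<in> interior (convex hull P)"
      then obtain s where "s \<in> P" "sg 0 * orient a0 a1 s > sg 0 * orient a0 a1 ym"
        using lin_interior_orient[OF fin _ a01, of ym "sg 0"] sg0 by auto
      then show False using Mge ym unfolding g_def by force
    qed
    moreover have "ym \<in> closure (convex hull P)"
      using ym(1) hull_inc[of ym P convex] closure_subset by blast
    ultimately have "ym \<in> ch P" unfolding ch_def frontier_def using ym(1) by blast
    then have "ym = a0 \<or> ym = a1" using setc c2 by auto
    then have "g ym = 0" unfolding g_def orient_def by auto
    then show False using gx0 Mge[OF x0(1)] ym by simp
  qed
  have cons: "sg (i+1) = sg i" if "i + 1 < L" for i
  proof -
    have iL: "i < L" using that by simp
    have m1: "(i+1) mod L = i+1" using that by simp
    have m2: "(i+1+1) mod L = (i+2) mod L" by simp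
    have k: "(i+2) mod L < L" using L3 by simp
    have kne: "(i+2) mod L \<noteq> i" "(i+2) mod L \<noteq> i+1"
    proof -
      show "(i+2) mod L \<noteq> i"
      proof (cases "i + 2 < L")
        case True then show ?thesis by simp
      next
        case False then have "i + 2 = L" using that by simp
        then show ?thesis using L3 by auto
      qed
      show "(i+2) mod L \<noteq> i + 1"
      proof (cases "i + 2 < L")
        case True then show ?thesis by simp
      next
        case False then have "i + 2 = L" using that by simp
        then show ?thesis by auto
      qed
    qed
    have ne1: "c!((i+2) mod L) \<noteq> c!i" "c!((i+2) mod L) \<noteq> c!(i+1)" "c!i \<noteq> c!(i+1)"
      using nth_eq_iff_index_eq[OF dist] k kne iL that unfolding L_def by auto
    have A: "0 < sg i * orient (c!i) (c!(i+1)) (c!((i+2) mod L))"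
      using sg[OF iL] cP[OF k] ne1 m1 by auto
    have B: "0 < sg (i+1) * orient (c!(i+1)) (c!((i+2) mod L)) (c!i)"
      using sg[OF that] cP[OF iL] ne1 m2 by auto
    have "orient (c!(i+1)) (c!((i+2) mod L)) (c!i) = orient (c!i) (c!(i+1)) (c!((i+2) mod L))"
      by (rule orient_cyc)
    then show ?thesis using A B sg[OF iL] sg[OF that]
      by (smt (verit) mult_minus_left mult_1)
  qed
  have all: "sg i = sg 0" if "i < L" for i
    using that
  proof (induction i)
    case (Suc i) then show ?case using cons[of i] by simp
  qed simp
  define \<sigma> where "\<sigma> = sg 0"
  have "\<sigma> = 1 \<or> \<sigma> = -1" unfolding \<sigma>_def using sg[of 0] L2 by simp
  moreover have "\<forall>t y. t + 1 < length c \<longrightarrow> y \<in> P \<longrightarrow> 0 \<le> \<sigma> * orient (c!t) (c!(t+1)) y"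
  proof (intro allI impI)
    fix t y assume t: "t + 1 < length c" and y: "y \<in> P"
    then have "(t+1) mod L = t + 1" unfolding L_def by simp
    then show "0 \<le> \<sigma> * orient (c!t) (c!(t+1)) y" using sg[of t] all[of t] t y unfolding \<sigma>_def L_def by auto
  qed
  moreover have "\<forall>y\<in>P - ch P. 0 < \<sigma> * orient (c!(length c - 1)) (c!0) y"
  proof
    fix y assume y: "y \<in> P - ch P"
    have i: "L - 1 < L" using L2 by simp
    have m: "(L - 1 + 1) mod L = 0" using L2 by simp
    have i0: "0 < L" using L2 by simp
    have "c!(L-1) \<in> ch P" "c!0 \<in> ch P" using setc nth_mem[OF i[unfolded L_def]] nth_mem[OF i0[unfolded L_def]]
      unfolding L_def by auto
    then have "y \<noteq> c!(L-1)" "y \<noteq> c!0" using y by auto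
    then show "0 < \<sigma> * orient (c!(length c - 1)) (c!0) y"
      using sg[OF i] all[OF i] m y unfolding \<sigma>_def L_def by auto
  qed
  ultimately show ?thesis by blast
qed



inductive_cases qE: "qtree_on i j (Node l N r)"

definition rho :: "nat \<times> nat \<times> nat \<Rightarrow> nat" where
  "rho N = (case N of (i,t,j) \<Rightarrow> j - i)"

definition goodset where
  "goodset P c T \<sigma> x = {N \<in> set_tree T. x \<in> population P c N \<and> 0 < fN c \<sigma> N x}"

definition k1 where "k1 P c T \<sigma> x = Min (rho ` goodset P c T \<sigma> x)"

definition k2 where
  "k2 P c T \<sigma> x = Max ((\<lambda>N. fN c \<sigma> N x) ` {N \<in> goodset P c T \<sigma> x. rho N = k1 P c T \<sigma> x})"

definition klt where
  "klt P c T \<sigma> v x \<longleftrightarrow> k1 P c T \<sigma> v < k1 P c T \<sigma> x \<or>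
     (k1 P c T \<sigma> v = k1 P c T \<sigma> x \<and> k2 P c T \<sigma> x < k2 P c T \<sigma> v)"

lemma rho_desc:
  assumes "qtree_on i j (Node l (i,t,j) r)" "N' \<in> set_tree l \<union> set_tree r"
  shows "rho N' < j - i"
proof -
  obtain a b d where N': "N' = (a,b,d)" by (cases N') auto
  from assms(1) have h: "i \<le> t" "t < j" "t = i \<and> l = Leaf \<or> t \<noteq> i \<and> qtree_on i t l"
    "t + 1 = j \<and> r = Leaf \<or> t + 1 \<noteq> j \<and> qtree_on (t + 1) j r"
    by (auto elim: qE)
  show ?thesis
  proof (cases "N' \<in> set_tree l")
    case True
    then have "qtree_on i t l" using h(3) by auto
    from qtree_range[OF this True[unfolded N']] show ?thesis using h unfolding N' rho_def by auto
  next
    case False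
    then have "N' \<in> set_tree r" using assms(2) by auto
    then have r: "N' \<in> set_tree r" "qtree_on (t+1) j r" using h(4) by auto
    from qtree_range[OF r(2) r(1)[unfolded N']] show ?thesis using h unfolding N' rho_def by auto
  qed
qed

lemma norm_pos_sqrt: "(a::pt) \<noteq> b \<Longrightarrow> 0 < sqrt ((b$1 - a$1)^2 + (b$2 - a$2)^2)"
proof -
  assume "a \<noteq> b"
  then have "0 < norm (b - a)" by simp
  then show ?thesis by (simp only: norm2 vector_minus_component)
qed

lemma GL:
  assumes fin: "finite P" and qt: "quadrangle_tree_for P c T"
    and sig: "\<sigma> = 1 \<or> \<sigma> = -1"
    and G: "\<And>t y. t + 1 < length c \<Longrightarrow> y \<in> P \<Longrightarrow> 0 \<le> \<sigma> * orient (c!t) (c!(t+1)) y"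
    and R: "\<And>y. y \<in> P - ch P \<Longrightarrow> 0 < \<sigma> * orient (c!(length c - 1)) (c!0) y"
    and x: "x \<in> P - ch P" and ABC: "A \<in> P" "B \<in> P" "C \<in> P"
    and xin: "x \<in> interior (convex hull {A,B,C})"
  shows "\<exists>v\<in>{A,B,C}. qprec P c T x v \<and> klt P c T \<sigma> v x"
proof -
  define L where "L = length c"
  have ho: "hull_order P c" and qT: "qtree_on 0 (L - 1) T" using qt unfolding quadrangle_tree_for_def L_def by auto
  have dist: "distinct c" using ho unfolding hull_order_def by simp
  have G': "0 \<le> \<sigma> * orient (c!t) (c!(t+1)) y" if "t + 1 \<le> j" "j \<le> L - 1" "y \<in> P" for t y j
  proof -
    have "t + 1 < L" using that(1,2) by (cases L) auto
    then show ?thesis using G[of t y] that(3) unfolding L_def by blast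
  qed
  have covT: "\<exists>l N r. Node l N r \<in> subtrees S \<and> y \<in> population P c N \<and> 0 < fN c \<sigma> N y"
    if "qtree_on i j S" "j \<le> L - 1" "y \<in> P" "0 < \<sigma> * orient (c!j) (c!i) y" for i j S y
    by (rule cov[OF that(1) _ that(3,4)]) (use G' that(2) in blast)
  have fing: "finite (goodset P c T \<sigma> y)" for y unfolding goodset_def by simp
  obtain l0 N00 r0 where h00: "Node l0 N00 r0 \<in> subtrees T" "x \<in> population P c N00" "0 < fN c \<sigma> N00 x"
    using covT[OF qT le_refl, of x] R[OF x] x unfolding L_def by auto
  have gx: "N00 \<in> goodset P c T \<sigma> x" unfolding goodset_def using in_set_tree_if[OF h00(1)] h00 by blast
  then have "k1 P c T \<sigma> x \<in> rho ` goodset P c T \<sigma> x" unfolding k1_def using fing[of x]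
    by (intro Min_in) auto
  then obtain N1 where "N1 \<in> goodset P c T \<sigma> x" "k1 P c T \<sigma> x = rho N1" by auto
  then have "N1 \<in> {N \<in> goodset P c T \<sigma> x. rho N = k1 P c T \<sigma> x}" by simp
  then have G1ne: "{N \<in> goodset P c T \<sigma> x. rho N = k1 P c T \<sigma> x} \<noteq> {}" by blast
  have "k2 P c T \<sigma> x \<in> (\<lambda>N. fN c \<sigma> N x) ` {N \<in> goodset P c T \<sigma> x. rho N = k1 P c T \<sigma> x}"
    unfolding k2_def by (intro Max_in) (use fing[of x] G1ne in auto)
  then obtain N0 where N0: "N0 \<in> goodset P c T \<sigma> x" "rho N0 = k1 P c T \<sigma> x" "fN c \<sigma> N0 x = k2 P c T \<sigma> x"
    by auto
  obtain i t j where N0e: "N0 = (i,t,j)" by (cases N0) auto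
  have N0T: "N0 \<in> set_tree T" and xpop: "x \<in> population P c N0" and fx: "0 < fN c \<sigma> N0 x"
    using N0(1) unfolding goodset_def by auto
  obtain l r where sub0: "Node l N0 r \<in> subtrees T" using set_treeE[OF N0T] by blast
  have q0: "qtree_on i j (Node l N0 r)" using qtree_sub[OF qT sub0[unfolded N0e]] N0e by simp
  have rg: "i \<le> t" "t < j" "j \<le> L - 1" using qtree_range[OF qT N0T[unfolded N0e]] by auto
  have cij: "c!j \<noteq> c!i" using nth_eq_iff_index_eq[OF dist] rg unfolding L_def by auto
  have s0: "\<sigma> \<noteq> 0" using sig by auto
  obtain v where v: "v \<in> {A,B,C}" "\<sigma> * orient (c!j) (c!i) v > \<sigma> * orient (c!j) (c!i) x"
    using lin_interior_orient[OF _ xin cij s0] by auto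
  have vP: "v \<in> P" using v(1) ABC by auto
  have fxv: "fN c \<sigma> N0 x < fN c \<sigma> N0 v" using v(2) unfolding N0e fN_def by simp
  have fv: "0 < \<sigma> * orient (c!j) (c!i) v" using fx fxv unfolding N0e fN_def by simp
  obtain l' N' r' where N': "Node l' N' r' \<in> subtrees (Node l N0 r)" "v \<in> population P c N'" "0 < fN c \<sigma> N' v"
    using covT[OF q0 rg(3) vP fv] by blast
  have N'T: "N' \<in> set_tree T" by (rule in_set_tree_if[OF subtrees_trans[OF sub0 N'(1)]])
  have gv: "N' \<in> goodset P c T \<sigma> v" unfolding goodset_def using N'T N' by simp
  have k1v: "k1 P c T \<sigma> v \<le> rho N'" unfolding k1_def by (rule Min_le) (use fing[of v] gv in auto)
  show ?thesis
  proof (cases "Node l' N' r' = Node l N0 r")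
    case True
    then have NN: "N' = N0" by simp
    have absf: "\<bar>orient (c!i) (c!j) y\<bar> = \<sigma> * orient (c!j) (c!i) y" if "0 < \<sigma> * orient (c!j) (c!i) y" for y
      using that sig orient_swap[of "c!i" "c!j" y] by auto
    have "infdist x (rline c N0) < infdist v (rline c N0)"
      unfolding N0e rline_def using infdist_line[of "c!i" "c!j"] cij absf[of x] absf[of v] fx fv fxv
        norm_pos_sqrt[of "c!i" "c!j"] unfolding N0e fN_def by (auto simp: divide_strict_right_mono)
    then have qp: "qprec P c T x v" unfolding qprec_def using N0T xpop N'(2) NN by blast
    have "klt P c T \<sigma> v x"
    proof (cases "k1 P c T \<sigma> v < k1 P c T \<sigma> x")
      case True then show ?thesis unfolding klt_def by simp
    next
      case False
      then have eq: "k1 P c T \<sigma> v = k1 P c T \<sigma> x" using k1v NN N0(2) by simp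
      have "N0 \<in> {N \<in> goodset P c T \<sigma> v. rho N = k1 P c T \<sigma> v}" using gv NN eq N0(2) by simp
      then have "fN c \<sigma> N0 v \<le> k2 P c T \<sigma> v" unfolding k2_def by (rule Max_ge[rotated, OF imageI]) (use fing[of v] in auto)
      then show ?thesis unfolding klt_def using eq fxv N0(3) by simp
    qed
    then show ?thesis using qp v(1) by blast
  next
    case False
    then have "Node l' N' r' \<in> subtrees l \<union> subtrees r" using N'(1) by auto
    then have N'lr: "N' \<in> set_tree l \<union> set_tree r" using in_set_tree_if[of l' N' r' l] in_set_tree_if[of l' N' r' r] by blast
    then have "(N0, N') \<in> anc_pairs (Node l N0 r)" by simp
    then have "(N0, N') \<in> anc_pairs T" using subtrees_anc[OF sub0] by blast
    then have qp: "qprec P c T x v" unfolding qprec_def using N0T N'T xpop N'(2) by blast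
    have "rho N' < rho N0" using rho_desc[OF q0[unfolded N0e] N'lr] unfolding N0e rho_def by simp
    then have "klt P c T \<sigma> v x" unfolding klt_def using k1v N0(2) by simp
    then show ?thesis using qp v(1) by blast
  qed
qed



definition sel :: "nat \<Rightarrow> int \<times> int \<times> int \<Rightarrow> int" where
  "sel d w = (case w of (a,b,e) \<Rightarrow> if d = 0 then a else if d = 1 then b else e)"

lemma rank_eq:
  fixes S :: "nat set"
  assumes "finite S" "a \<in> S" "b \<in> S" "card {i\<in>S. i < a} = card {i\<in>S. i < b}"
  shows "a = b"
proof (rule ccontr)
  assume "a \<noteq> b"
  then consider "a < b" | "b < a" by linarith
  then show False
  proof cases
    case 1
    have "{i\<in>S. i < a} \<subset> {i\<in>S. i < b}" using 1 assms(2) by auto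
    then have "card {i\<in>S. i < a} < card {i\<in>S. i < b}" using psubset_card_mono[of "{i\<in>S. i < b}" "{i\<in>S. i < a}"] assms(1) by auto
    then show False using assms(4) by simp
  next
    case 2
    have "{i\<in>S. i < b} \<subset> {i\<in>S. i < a}" using 2 assms(3) by auto
    then have "card {i\<in>S. i < b} < card {i\<in>S. i < a}" using psubset_card_mono[of "{i\<in>S. i < a}" "{i\<in>S. i < b}"] assms(1) by auto
    then show False using assms(4) by simp
  qed
qed

locale cnt =
  fixes P :: "pt set" and c :: "pt list" and T :: "(nat \<times> nat \<times> nat) tree"
    and \<mu> :: "pt \<Rightarrow> nat" and W :: "nat \<Rightarrow> int \<times> int \<times> int"
  assumes finP: "finite P"
    and GLp: "\<And>x A B C. x \<in> P - ch P \<Longrightarrow> A \<in> P \<Longrightarrow> B \<in> P \<Longrightarrow> C \<in> P \<Longrightarrow>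
       x \<in> interior (convex hull {A,B,C}) \<Longrightarrow> \<exists>v\<in>{A,B,C}. qprec P c T x v \<and> \<mu> v < \<mu> x"
begin

definition idx :: "(nat \<Rightarrow> pt) \<Rightarrow> pt \<Rightarrow> nat" where
  "idx I x = the_inv_into {1..card P} I x"

definition tgt :: "(nat \<Rightarrow> pt) \<Rightarrow> nat \<Rightarrow> nat \<Rightarrow> pt" where
  "tgt I i d = I (nat (sel d (W i)))"

definition goodd where
  "goodd I i d \<longleftrightarrow> d < 3 \<and> qprec P c T (I i) (tgt I i d) \<and> \<mu> (tgt I i d) < \<mu> (I i)"

definition dig where "dig I i = (SOME d. goodd I i d)"

definition phiI where
  "phiI I = restrict (\<lambda>x. tgt I (idx I x) (dig I (idx I x))) (P - ch P)"

definition omI where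
  "omI I = restrict (\<lambda>y. {(x1,x2). x1 \<in> fiber P (phiI I) y \<and> x2 \<in> fiber P (phiI I) y \<and> idx I x1 \<le> idx I x2}) P"

definition DgI where
  "DgI I = restrict (\<lambda>i. if I i \<in> ch P then 0 else dig I i) {1..card P}"

definition HpI where "HpI I = restrict (idx I) (ch P)"

definition Phi where "Phi I = ((phiI I, omI I), DgI I, HpI I)"

lemma chP: "ch P \<subseteq> P" unfolding ch_def by auto

lemma arr:
  assumes "I \<in> V P W"
  shows "bij_betw I {1..card P} P" "I \<in> {1..card P} \<rightarrow>\<^sub>E P" "is_witness_list P W I"
  using assms unfolding V_def arrays_def by auto

lemma idx_props:
  assumes "I \<in> V P W"
  shows "\<And>x. x \<in> P \<Longrightarrow> idx I x \<in> {1..card P} \<and> I (idx I x) = x"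
    and "\<And>i. i \<in> {1..card P} \<Longrightarrow> idx I (I i) = i \<and> I i \<in> P"
proof -
  have b: "bij_betw I {1..card P} P" using arr[OF assms] by simp
  then have inj: "inj_on I {1..card P}" and im: "I ` {1..card P} = P" unfolding bij_betw_def by auto
  show "\<And>x. x \<in> P \<Longrightarrow> idx I x \<in> {1..card P} \<and> I (idx I x) = x"
  proof -
    fix x assume x: "x \<in> P"
    then have "x \<in> I ` {1..card P}" using im by simp
    then show "idx I x \<in> {1..card P} \<and> I (idx I x) = x"
      unfolding idx_def using the_inv_into_into[OF inj _ subset_refl] f_the_inv_into_f[OF inj] by blast
  qed
  show "\<And>i. i \<in> {1..card P} \<Longrightarrow> idx I (I i) = i \<and> I i \<in> P"
    unfolding idx_def using the_inv_into_f_f[OF inj] im by auto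
qed

lemma wit:
  assumes "I \<in> V P W" "i \<in> {1..card P}"
  shows "I i \<in> ch P \<longleftrightarrow> fst (W i) = -1"
    and "I i \<notin> ch P \<Longrightarrow> d < 3 \<Longrightarrow> sel d (W i) \<in> {1..int (card P)}"
    and "I i \<notin> ch P \<Longrightarrow> I i \<in> interior (convex hull {tgt I i 0, tgt I i 1, tgt I i 2})"
proof -
  obtain a b e where We: "W i = (a,b,e)" by (cases "W i") auto
  have w: "if I i \<in> ch P then a = -1 \<and> b = -1 \<and> e = -1
            else a \<in> {1..int (card P)} \<and> b \<in> {1..int (card P)} \<and> e \<in> {1..int (card P)} \<and>
                 I i \<in> interior (convex hull {I (nat a), I (nat b), I (nat e)})"
    using arr(3)[OF assms(1)] assms(2) We unfolding is_witness_list_def by fastforce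
  show "I i \<in> ch P \<longleftrightarrow> fst (W i) = -1" using w We by (auto split: if_splits)
  show "I i \<notin> ch P \<Longrightarrow> d < 3 \<Longrightarrow> sel d (W i) \<in> {1..int (card P)}"
    using w We unfolding sel_def by (auto split: if_splits)
  show "I i \<notin> ch P \<Longrightarrow> I i \<in> interior (convex hull {tgt I i 0, tgt I i 1, tgt I i 2})"
    using w We unfolding tgt_def sel_def by (auto split: if_splits)
qed

lemma tgt_props:
  assumes "I \<in> V P W" "i \<in> {1..card P}" "I i \<notin> ch P" "d < 3"
  shows "nat (sel d (W i)) \<in> {1..card P}" "tgt I i d \<in> P" "idx I (tgt I i d) = nat (sel d (W i))"
proof -
  have s: "sel d (W i) \<in> {1..int (card P)}" using wit(2)[OF assms(1,2,3,4)] .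
  then show n: "nat (sel d (W i)) \<in> {1..card P}" by auto
  show "tgt I i d \<in> P" "idx I (tgt I i d) = nat (sel d (W i))"
    unfolding tgt_def using idx_props(2)[OF assms(1) n] by auto
qed

lemma dig_good:
  assumes "I \<in> V P W" "i \<in> {1..card P}" "I i \<notin> ch P"
  shows "goodd I i (dig I i)"
proof -
  have xP: "I i \<in> P" using idx_props(2)[OF assms(1,2)] by simp
  obtain v where v: "v \<in> {tgt I i 0, tgt I i 1, tgt I i 2}" "qprec P c T (I i) v" "\<mu> v < \<mu> (I i)"
    using GLp[of "I i" "tgt I i 0" "tgt I i 1" "tgt I i 2"] xP assms(3)
      tgt_props(2)[OF assms, of 0] tgt_props(2)[OF assms, of 1] tgt_props(2)[OF assms, of 2]
      wit(3)[OF assms] by auto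
  then have "\<exists>d. goodd I i d" unfolding goodd_def
    by (elim insertE) (auto intro: exI[of _ "0::nat"] exI[of _ "1::nat"] exI[of _ "2::nat"])
  then show ?thesis unfolding dig_def by (rule someI_ex)
qed

lemma fib_char:
  assumes K: "K \<in> V P W" and y: "y \<in> P"
  shows "x' \<in> fiber P (phiI K) y \<longleftrightarrow> x' \<in> P \<and> idx K x' \<in> {i\<in>{1..card P}. fst (W i) \<noteq> -1 \<and> sel (DgI K i) (W i) = int (idx K y)}"
proof
  assume f: "x' \<in> fiber P (phiI K) y"
  then have x': "x' \<in> P" "x' \<notin> ch P" "phiI K x' = y" unfolding fiber_def by auto
  define i where "i = idx K x'"
  have i: "i \<in> {1..card P}" "K i = x'" using idx_props(1)[OF K x'(1)] i_def by auto
  have fw: "fst (W i) \<noteq> -1" using wit(1)[OF K i(1)] x'(2) i(2) by simp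
  have D: "DgI K i = dig K i" unfolding DgI_def using i x'(2) by simp
  have dg: "dig K i < 3" using dig_good[OF K i(1)] x'(2) i(2) unfolding goodd_def by simp
  have "y = tgt K i (dig K i)" using x'(3) x'(1,2) unfolding phiI_def i_def by simp
  then have "idx K y = nat (sel (dig K i) (W i))" using tgt_props(3)[OF K i(1) _ dg] x'(2) i(2) by simp
  moreover have "sel (dig K i) (W i) \<in> {1..int (card P)}" using wit(2)[OF K i(1) _ dg] x'(2) i(2) by simp
  ultimately have "sel (DgI K i) (W i) = int (idx K y)" using D by simp
  then show "x' \<in> P \<and> idx K x' \<in> {i\<in>{1..card P}. fst (W i) \<noteq> -1 \<and> sel (DgI K i) (W i) = int (idx K y)}"
    using x'(1) i fw i_def by simp
next
  assume h: "x' \<in> P \<and> idx K x' \<in> {i\<in>{1..card P}. fst (W i) \<noteq> -1 \<and> sel (DgI K i) (W i) = int (idx K y)}"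
  define i where "i = idx K x'"
  have i: "i \<in> {1..card P}" "K i = x'" using idx_props(1)[OF K] h i_def by auto
  have nch: "x' \<notin> ch P" using wit(1)[OF K i(1)] h i by (simp add: i_def)
  have D: "DgI K i = dig K i" unfolding DgI_def using i nch by simp
  have s: "sel (dig K i) (W i) = int (idx K y)" using h D i_def by simp
  have "phiI K x' = tgt K i (dig K i)" using h nch unfolding phiI_def i_def by simp
  also have "... = K (idx K y)" unfolding tgt_def s by simp
  also have "... = y" using idx_props(1)[OF K y] by simp
  finally show "x' \<in> fiber P (phiI K) y" unfolding fiber_def using h nch by simp
qed

lemma Phi_in:
  assumes K: "K \<in> V P W"
  shows "Phi K \<in> OD P c T \<times> ({1..card P} \<rightarrow>\<^sub>E {..<3::nat}) \<times> (ch P \<rightarrow>\<^sub>E {1..card P})"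
proof -
  have ph: "phiI K \<in> downdrafts P c T"
    unfolding downdrafts_def
  proof (intro CollectI conjI ballI)
    show "phiI K \<in> (P - ch P) \<rightarrow>\<^sub>E P"
      unfolding phiI_def restrict_PiE_iff
    proof
      fix x assume x: "x \<in> P - ch P"
      have i: "idx K x \<in> {1..card P}" "K (idx K x) = x" using idx_props(1)[OF K] x by auto
      have "dig K (idx K x) < 3" using dig_good[OF K i(1)] x i(2) unfolding goodd_def by simp
      then show "tgt K (idx K x) (dig K (idx K x)) \<in> P" using tgt_props(2)[OF K i(1)] x i(2) by simp
    qed
  next
    fix x assume x: "x \<in> P - ch P"
    have i: "idx K x \<in> {1..card P}" "K (idx K x) = x" using idx_props(1)[OF K] x by auto
    have "goodd K (idx K x) (dig K (idx K x))" using dig_good[OF K i(1)] x i(2) by simp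
    then show "qprec P c T x (phiI K x)" unfolding goodd_def phiI_def using x i(2) by simp
  qed
  have om: "omI K \<in> (\<Pi>\<^sub>E y\<in>P. {r. r \<subseteq> fiber P (phiI K) y \<times> fiber P (phiI K) y \<and> linear_order_on (fiber P (phiI K) y) r})"
    unfolding omI_def restrict_PiE_iff
  proof
    fix y assume y: "y \<in> P"
    define F where "F = fiber P (phiI K) y"
    have FP: "F \<subseteq> P" unfolding F_def fiber_def by auto
    have injF: "x1 = x2" if "x1 \<in> F" "x2 \<in> F" "idx K x1 = idx K x2" for x1 x2
      using idx_props(1)[OF K, of x1] idx_props(1)[OF K, of x2] that FP by force
    show "{(x1,x2). x1 \<in> fiber P (phiI K) y \<and> x2 \<in> fiber P (phiI K) y \<and> idx K x1 \<le> idx K x2}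
        \<in> {r. r \<subseteq> fiber P (phiI K) y \<times> fiber P (phiI K) y \<and> linear_order_on (fiber P (phiI K) y) r}"
      unfolding F_def[symmetric]
      unfolding linear_order_on_def partial_order_on_def preorder_on_def refl_on_def trans_def
        antisym_def total_on_def
      using injF by (auto intro: order_antisym)
  qed
  have "(phiI K, omI K) \<in> OD P c T" unfolding OD_def using ph om by simp
  moreover have "DgI K \<in> {1..card P} \<rightarrow>\<^sub>E {..<3::nat}"
    unfolding DgI_def restrict_PiE_iff
  proof
    fix i assume i: "i \<in> {1..card P}"
    show "(if K i \<in> ch P then 0 else dig K i) \<in> {..<3}"
      using dig_good[OF K i] unfolding goodd_def by auto
  qed
  moreover have "HpI K \<in> ch P \<rightarrow>\<^sub>E {1..card P}"
    unfolding HpI_def restrict_PiE_iff using idx_props(1)[OF K] chP by auto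
  ultimately show ?thesis unfolding Phi_def by simp
qed

lemma Phi_inj:
  assumes I: "I \<in> V P W" and J: "J \<in> V P W" and eq: "Phi I = Phi J"
  shows "I = J"
proof -
  have ph: "phiI I = phiI J" and om: "omI I = omI J" and Dg: "DgI I = DgI J" and Hp: "HpI I = HpI J"
    using eq unfolding Phi_def by auto
  have main: "x \<in> P \<longrightarrow> idx I x = idx J x" for x
  proof (induction x rule: measure_induct_rule[where f=\<mu>])
    case (less x)
    show ?case
    proof
      assume xP: "x \<in> P"
      show "idx I x = idx J x"
      proof (cases "x \<in> ch P")
        case True
        then show ?thesis using Hp unfolding HpI_def by (metis restrict_apply')
      next
        case False
        define i where "i = idx I x"
        have i: "i \<in> {1..card P}" "I i = x" using idx_props(1)[OF I xP] i_def by auto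
        define y where "y = phiI I x"
        have gd: "goodd I i (dig I i)" using dig_good[OF I i(1)] False i(2) by simp
        have y: "y = tgt I i (dig I i)" unfolding y_def phiI_def i_def using xP False by simp
        have yP: "y \<in> P" using tgt_props(2)[OF I i(1)] gd False i(2) unfolding goodd_def y by simp
        have "\<mu> y < \<mu> x" using gd i(2) y unfolding goodd_def by simp
        then have iy: "idx I y = idx J y" using less yP by blast
        define F where "F = fiber P (phiI I) y"
        have FJ: "F = fiber P (phiI J) y" unfolding F_def ph ..
        define S where "S = {i\<in>{1..card P}. fst (W i) \<noteq> -1 \<and> sel (DgI I i) (W i) = int (idx I y)}"
        have SJ: "S = {i\<in>{1..card P}. fst (W i) \<noteq> -1 \<and> sel (DgI J i) (W i) = int (idx J y)}"
          unfolding S_def Dg iy ..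
        have fI: "x' \<in> F \<longleftrightarrow> x' \<in> P \<and> idx I x' \<in> S" for x'
          unfolding F_def S_def using fib_char[OF I yP] .
        have fJ: "x' \<in> F \<longleftrightarrow> x' \<in> P \<and> idx J x' \<in> S" for x'
          unfolding FJ SJ using fib_char[OF J yP] .
        have xF: "x \<in> F" unfolding F_def fiber_def y_def using xP False by simp
        have finS: "finite S" unfolding S_def by simp
        have rank: "card {x'\<in>F. (x', x) \<in> omI K y \<and> x' \<noteq> x} = card {i\<in>S. i < idx K x}"
          if K: "K \<in> V P W" and fK: "\<And>x'. x' \<in> F \<longleftrightarrow> x' \<in> P \<and> idx K x' \<in> S"
            and FK: "F = fiber P (phiI K) y" for K
        proof -
          have omy: "omI K y = {(x1,x2). x1 \<in> F \<and> x2 \<in> F \<and> idx K x1 \<le> idx K x2}"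
            unfolding omI_def FK using yP by simp
          have injK: "inj_on (idx K) P"
            by (rule inj_on_inverseI[where g=K]) (use idx_props(1)[OF K] in auto)
          have set_eq: "{x'\<in>F. (x', x) \<in> omI K y \<and> x' \<noteq> x} = {x'\<in>F. idx K x' < idx K x}"
          proof -
            have "(x', x) \<in> omI K y \<and> x' \<noteq> x \<longleftrightarrow> idx K x' < idx K x" if "x' \<in> F" for x'
            proof -
              have x'P: "x' \<in> P" using that fK by blast
              have "x' \<noteq> x \<longleftrightarrow> idx K x' \<noteq> idx K x" using inj_on_eq_iff[OF injK x'P xP] by blast
              then show ?thesis unfolding omy using that xF by auto
            qed
            then show ?thesis by blast
          qed
          have "bij_betw (idx K) {x'\<in>F. idx K x' < idx K x} {i\<in>S. i < idx K x}"
            unfolding bij_betw_def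
          proof
            show "inj_on (idx K) {x'\<in>F. idx K x' < idx K x}"
              by (rule inj_on_subset[OF injK]) (use fK in auto)
            show "idx K ` {x'\<in>F. idx K x' < idx K x} = {i\<in>S. i < idx K x}"
            proof
              show "idx K ` {x'\<in>F. idx K x' < idx K x} \<subseteq> {i\<in>S. i < idx K x}" using fK by auto
              show "{i\<in>S. i < idx K x} \<subseteq> idx K ` {x'\<in>F. idx K x' < idx K x}"
              proof
                fix j assume j: "j \<in> {i\<in>S. i < idx K x}"
                then have j1: "j \<in> {1..card P}" unfolding S_def by simp
                have "idx K (K j) = j" "K j \<in> P" using idx_props(2)[OF K j1] by auto
                then have "K j \<in> {x'\<in>F. idx K x' < idx K x}" using fK j by auto
                then show "j \<in> idx K ` {x'\<in>F. idx K x' < idx K x}" using \<open>idx K (K j) = j\<close> by force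
              qed
            qed
          qed
          then show ?thesis unfolding set_eq by (rule bij_betw_same_card)
        qed
        have "card {i\<in>S. i < idx I x} = card {i\<in>S. i < idx J x}"
          using rank[OF I fI F_def] rank[OF J fJ FJ] om by simp
        moreover have "idx I x \<in> S" "idx J x \<in> S" using fI fJ xF by auto
        ultimately show ?thesis using rank_eq[OF finS] by blast
      qed
    qed
  qed
  show "I = J"
  proof
    fix i
    show "I i = J i"
    proof (cases "i \<in> {1..card P}")
      case True
      have "idx I (I i) = i" "I i \<in> P" using idx_props(2)[OF I True] by auto
      then have "idx J (I i) = i" using main by simp
      then show ?thesis using idx_props(1)[OF J \<open>I i \<in> P\<close>] by simp
    next
      case False
      then show ?thesis using PiE_arb[OF arr(2)[OF I]] PiE_arb[OF arr(2)[OF J]] by simp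
    qed
  qed
qed

lemma finite_OD: "finite (OD P c T)"
proof -
  have "OD P c T \<subseteq> ((P - ch P) \<rightarrow>\<^sub>E P) \<times> (P \<rightarrow>\<^sub>E Pow (P \<times> P))"
  proof
    fix z assume z: "z \<in> OD P c T"
    then obtain \<phi> \<omega> where e: "z = (\<phi>, \<omega>)" "\<phi> \<in> downdrafts P c T"
      "\<omega> \<in> (\<Pi>\<^sub>E y\<in>P. {r. r \<subseteq> fiber P \<phi> y \<times> fiber P \<phi> y \<and> linear_order_on (fiber P \<phi> y) r})"
      unfolding OD_def by auto
    have "\<phi> \<in> (P - ch P) \<rightarrow>\<^sub>E P" using e(2) unfolding downdrafts_def by simp
    moreover have "\<omega> \<in> P \<rightarrow>\<^sub>E Pow (P \<times> P)"
      using e(3) PiE_mono[of P "\<lambda>y. {r. r \<subseteq> fiber P \<phi> y \<times> fiber P \<phi> y \<and> linear_order_on (fiber P \<phi> y) r}" "\<lambda>_. Pow (P \<times> P)"]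
      unfolding fiber_def by blast
    ultimately show "z \<in> ((P - ch P) \<rightarrow>\<^sub>E P) \<times> (P \<rightarrow>\<^sub>E Pow (P \<times> P))" using e(1) by simp
  qed
  moreover have "finite (((P - ch P) \<rightarrow>\<^sub>E P) \<times> (P \<rightarrow>\<^sub>E Pow (P \<times> P)))"
    using finP by (intro finite_cartesian_product finite_PiE) auto
  ultimately show ?thesis by (rule finite_subset)
qed

lemma card_V: "card (V P W) \<le> card (OD P c T) * 3 ^ card P * card P ^ card (ch P)"
proof -
  define Tg where "Tg = OD P c T \<times> ({1..card P} \<rightarrow>\<^sub>E {..<3::nat}) \<times> (ch P \<rightarrow>\<^sub>E {1..card P})"
  have finch: "finite (ch P)" using finP chP finite_subset by blast
  have finTg: "finite Tg" unfolding Tg_def using finite_OD finch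
    by (intro finite_cartesian_product finite_PiE) auto
  have sub: "Phi ` V P W \<subseteq> Tg" using Phi_in unfolding Tg_def by blast
  have inj: "inj_on Phi (V P W)" using Phi_inj unfolding inj_on_def by blast
  have "card (V P W) \<le> card Tg" by (rule card_inj_on_le[OF inj sub finTg])
  also have "card Tg = card (OD P c T) * (3 ^ card P * card P ^ card (ch P))"
    unfolding Tg_def card_cartesian_product using card_PiE[of "{1..card P}" "\<lambda>_. {..<3::nat}"]
      card_PiE[OF finch, of "\<lambda>_. {1..card P}"] by simp
  finally show ?thesis by (simp add: mult.assoc)
qed

end

lemma klt_trans: "klt P c T \<sigma> y v \<Longrightarrow> klt P c T \<sigma> v x \<Longrightarrow> klt P c T \<sigma> y x"
  unfolding klt_def by auto

lemma klt_irrefl: "\<not> klt P c T \<sigma> x x"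
  unfolding klt_def by auto

theorem corollary5p4:
  fixes P :: "pt set" and c :: "pt list" and T :: "(nat \<times> nat \<times> nat) tree"
  assumes "finite P"
    and "general_position P"
    and "quadrangle_tree_for P c T"
  shows "Vmax P \<le> card (OD P c T) * 3 ^ card P * card P ^ card (ch P)"
proof -
  define B where "B = card (OD P c T) * 3 ^ card P * card P ^ card (ch P)"
  have ex_mu: "\<exists>\<mu>::pt \<Rightarrow> nat. \<forall>x A B C. x \<in> P - ch P \<longrightarrow> A \<in> P \<longrightarrow> B \<in> P \<longrightarrow> C \<in> P \<longrightarrow>
       x \<in> interior (convex hull {A,B,C}) \<longrightarrow> (\<exists>v\<in>{A,B,C}. qprec P c T x v \<and> \<mu> v < \<mu> x)"
  proof (cases "P - ch P = {}")
    case True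
    then show ?thesis by auto
  next
    case False
    then obtain x0 where x0: "x0 \<in> P" "x0 \<notin> ch P" by auto
    have ho: "hull_order P c" using assms(3) unfolding quadrangle_tree_for_def by simp
    obtain \<sigma> :: real where sig: "\<sigma> = 1 \<or> \<sigma> = -1"
      and G: "\<forall>t y. t + 1 < length c \<longrightarrow> y \<in> P \<longrightarrow> 0 \<le> \<sigma> * orient (c!t) (c!(t+1)) y"
      and R: "\<forall>y\<in>P - ch P. 0 < \<sigma> * orient (c!(length c - 1)) (c!0) y"
      using hull_setup[OF assms(1,2) ho x0] by blast
    define \<mu> where "\<mu> x = card {y\<in>P. klt P c T \<sigma> y x}" for x
    have "\<forall>x A B C. x \<in> P - ch P \<longrightarrow> A \<in> P \<longrightarrow> B \<in> P \<longrightarrow> C \<in> P \<longrightarrow>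
       x \<in> interior (convex hull {A,B,C}) \<longrightarrow> (\<exists>v\<in>{A,B,C}. qprec P c T x v \<and> \<mu> v < \<mu> x)"
    proof (intro allI impI)
      fix x A B C
      assume h: "x \<in> P - ch P" "A \<in> P" "B \<in> P" "C \<in> P" "x \<in> interior (convex hull {A,B,C})"
      obtain v where v: "v \<in> {A,B,C}" "qprec P c T x v" "klt P c T \<sigma> v x"
        using GL[OF assms(1,3) sig _ _ h] G R by blast
      have vP: "v \<in> P" using v(1) h by auto
      have "{y\<in>P. klt P c T \<sigma> y v} \<subset> {y\<in>P. klt P c T \<sigma> y x}"
        using klt_trans[of P c T \<sigma> _ v x] v(3) vP klt_irrefl[of P c T \<sigma> v] by blast
      then have "\<mu> v < \<mu> x" unfolding \<mu>_def using assms(1) by (simp add: psubset_card_mono)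
      then show "\<exists>v\<in>{A,B,C}. qprec P c T x v \<and> \<mu> v < \<mu> x" using v by blast
    qed
    then show ?thesis by blast
  qed
  then obtain \<mu> :: "pt \<Rightarrow> nat" where mu: "\<And>x A B C. x \<in> P - ch P \<Longrightarrow> A \<in> P \<Longrightarrow> B \<in> P \<Longrightarrow> C \<in> P \<Longrightarrow>
       x \<in> interior (convex hull {A,B,C}) \<Longrightarrow> \<exists>v\<in>{A,B,C}. qprec P c T x v \<and> \<mu> v < \<mu> x"
    by blast
  have each: "card (V P W) \<le> B" for W
  proof -
    interpret cnt P c T \<mu> W using assms(1) mu by unfold_locales blast+
    show ?thesis using card_V unfolding B_def .
  qed
  have ne: "witness_lists (card P) \<noteq> {}"
  proof -
    have "restrict (\<lambda>_. (0,0,0)) {1..card P} \<in> witness_lists (card P)"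
      unfolding witness_lists_def by simp
    then show ?thesis by blast
  qed
  have sub: "(\<lambda>W. card (V P W)) ` witness_lists (card P) \<subseteq> {..B}" using each by auto
  have fin: "finite ((\<lambda>W. card (V P W)) ` witness_lists (card P))" using finite_subset[OF sub] by simp
  have "Vmax P \<le> B" unfolding Vmax_def
    by (rule Max.boundedI[OF fin]) (use ne each in auto)
  then show ?thesis unfolding B_def .
qed

end
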